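(* Let Assumptions 1 and 2 hold and let $x^\star=\arg\min F$. In Algorithm 2, suppose the $b$ indices of $\mathcal{B}_k$ are sampled independently from $\{1,\dots,n\}$ with probabilities $p_i=L_i/(nL_{\mathrm{avg}})$. Then, conditioned on $x_k$, $y_k$ and $\tilde x_s$, the error $\Delta_k=v_k-\nabla f(y_k)$ satisfies $$\mathbb{E}\|\Delta_k\|_{H^{-1}}^2\le\frac{2L_{\mathrm{avg}}^2}{b}\|x_k-y_k\|_H^2+\frac{8L_{\mathrm{avg}}}{b}\big(F(x_k)-F(x^\star)+F(\tilde x_s)-F(x^\star)\big).$$
   Context: Setting. $F(x)=f(x)+h(x)$ on $\mathbb{R}^d$, where $f=\frac1n\sum_{i=1}^n f_i$ with each $f_i:\mathbb{R}^d\to\mathbb{R}$ convex and differentiable, and $h:\mathbb{R}^d\to\mathbb{R}\cup\{+\infty\}$ is proper, convex, lower semicontinuous, with closed domain $\mathrm{dom}\,h$. $H$ is a fixed symmetric positive definite $d\times d$ matrix; $\|x\|_H=\sqrt{x^\top Hx}$, $\|x\|_{H^{-1}}=\sqrt{x^\top H^{-1}x}$, and $\langle x,y\rangle=x^\top y$. Assumption 1: each $f_i$ is $L_i$-smooth w.r.t. the $H$-norm, i.e. $\|\nabla f_i(x)-\nabla f_i(y)\|_{H^{-1}}\le L_i\|x-y\|_H$ for all $x,y$; $L_{\mathrm{avg}}=\frac1n\sum_{i=1}^nL_i$. Assumption 2: $f$ is $\mu$-strongly convex w.r.t. the $H$-norm for some $\mu>0$, i.e. $f(y)\ge f(x)+\langle\nabla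 f(x),y-x\rangle+\frac\mu2\|y-x\|_H^2$ for all $x,y$. In Algorithm 2, at inner step $k$ of outer iteration $s$ the current points are $x_k,y_k\in\mathbb{R}^d$ and the snapshot is $\tilde x_s$; the stochastic gradient is $v_k=\frac1b\sum_{i\in\mathcal B_k}\frac{\nabla f_i(y_k)-\nabla f_i(\tilde x_s)}{np_i}+\nabla f(\tilde x_s)$, where $\mathcal{B}_k$ is a multiset of $b$ sampled indices. *)

theory Defs
  imports "HOL-Analysis.Analysis" "HOL-Library.Extended_Real"
begin

definition Hnorm :: "real^'d^'d \<Rightarrow> real^'d \<Rightarrow> real" where
  "Hnorm H x = sqrt (x \<bullet> (H *v x))"

definition Hinvnorm :: "real^'d^'d \<Rightarrow> real^'d \<Rightarrow> real" where
  "Hinvnorm H x = sqrt (x \<bullet> (matrix_inv H *v x))"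

definition sym_pos_def_mat :: "real^'d^'d \<Rightarrow> bool" where
  "sym_pos_def_mat H \<longleftrightarrow> transpose H = H \<and> (\<forall>x. x \<noteq> 0 \<longrightarrow> x \<bullet> (H *v x) > 0)"

definition proper_fun :: "('a \<Rightarrow> ereal) \<Rightarrow> bool" where
  "proper_fun h \<longleftrightarrow> (\<forall>x. h x \<noteq> -\<infinity>) \<and> (\<exists>x. h x \<noteq> \<infinity>)"

definition convex_ext :: "('a::real_vector \<Rightarrow> ereal) \<Rightarrow> bool" where
  "convex_ext h \<longleftrightarrow> (\<forall>x y u. 0 < u \<and> u < 1 \<longrightarrow>
       h (u *\<^sub>R x + (1 - u) *\<^sub>R y) \<le> ereal u * h x + ereal (1 - u) * h y)"

definition lsc_ext :: "('a::topological_space \<Rightarrow> ereal) \<Rightarrow> bool" where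
  "lsc_ext h \<longleftrightarrow> (\<forall>x X. X \<longlonglongrightarrow> x \<longrightarrow> h x \<le> liminf (\<lambda>k. h (X k)))"

definition edom :: "('a \<Rightarrow> ereal) \<Rightarrow> 'a set" where
  "edom h = {x. h x \<noteq> \<infinity>}"

end

theory Submission
  imports Defs
begin


context
  fixes H :: "real^'d^'d"
  assumes H: "sym_pos_def_mat H"
begin

lemma Hinv: "H ** matrix_inv H = mat 1 \<and> matrix_inv H ** H = mat 1"
proof -
  have ker: "\<forall>x. H *v x = 0 \<longrightarrow> x = 0"
    using H unfolding sym_pos_def_mat_def by (metis inner_zero_right less_irrefl)
  then have "\<exists>B. B ** H = mat 1" using matrix_left_invertible_ker by blast
  then have "invertible H" using invertible_left_inverse by blast
  then show ?thesis unfolding invertible_def matrix_inv_def by (rule someI_ex)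
qed

lemma HM: "H *v (matrix_inv H *v x) = x"
  by (simp add: matrix_vector_mul_assoc Hinv)

lemma MH: "matrix_inv H *v (H *v x) = x"
  by (simp add: matrix_vector_mul_assoc Hinv)

lemma Hsym: "a \<bullet> (H *v b) = (H *v a) \<bullet> b"
proof -
  have "a v* H = H *v a" using H unfolding sym_pos_def_mat_def
    by (metis vector_transpose_matrix)
  then show ?thesis by (metis dot_lmul_matrix)
qed

lemma Msym: "a \<bullet> (matrix_inv H *v b) = (matrix_inv H *v a) \<bullet> b"
  by (metis HM Hsym)

lemma QH_nonneg: "0 \<le> x \<bullet> (H *v x)"
  using H unfolding sym_pos_def_mat_def by (cases "x = 0") (auto intro: less_imp_le)

lemma QH_pos: "x \<noteq> 0 \<Longrightarrow> 0 < x \<bullet> (H *v x)"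
  using H unfolding sym_pos_def_mat_def by auto

lemma QM_eq: "a \<bullet> (matrix_inv H *v a) = (matrix_inv H *v a) \<bullet> (H *v (matrix_inv H *v a))"
  by (simp add: HM inner_commute)

lemma QM_nonneg: "0 \<le> a \<bullet> (matrix_inv H *v a)"
  using QM_eq QH_nonneg by simp

lemma QM_zero: "a \<bullet> (matrix_inv H *v a) = 0 \<Longrightarrow> a = 0"
  by (metis QM_eq QH_pos HM matrix_vector_mult_0_right less_irrefl)

lemma Hnorm_sq: "(Hnorm H x)\<^sup>2 = x \<bullet> (H *v x)"
  unfolding Hnorm_def using QH_nonneg by simp

lemma Hinvnorm_sq: "(Hinvnorm H x)\<^sup>2 = x \<bullet> (matrix_inv H *v x)"
  unfolding Hinvnorm_def using QM_nonneg by simp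

lemma Hnorm_nonneg: "0 \<le> Hnorm H x" unfolding Hnorm_def using QH_nonneg by simp
lemma Hinvnorm_nonneg: "0 \<le> Hinvnorm H x" unfolding Hinvnorm_def using QM_nonneg by simp

lemma Hnorm_pos: "x \<noteq> 0 \<Longrightarrow> 0 < Hnorm H x" unfolding Hnorm_def using QH_pos by simp

lemma Hnorm_scale: "Hnorm H (c *\<^sub>R x) = \<bar>c\<bar> * Hnorm H x"
proof -
  have "(c *\<^sub>R x) \<bullet> (H *v (c *\<^sub>R x)) = c^2 * (x \<bullet> (H *v x))"
    by (simp add: matrix_vector_mult_scaleR power2_eq_square)
  then show ?thesis unfolding Hnorm_def by (simp add: real_sqrt_mult)
qed

lemma Hnorm_commute: "Hnorm H (x - y) = Hnorm H (y - x)"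
  using Hnorm_scale[of "-1" "x - y"] by simp

lemma Hinvnorm_zero: "Hinvnorm H a \<le> 0 \<Longrightarrow> a = 0"
  using Hinvnorm_sq[of a] Hinvnorm_nonneg[of a] QM_zero by (simp add: power2_eq_square)

lemma CS: "a \<bullet> x \<le> Hinvnorm H a * Hnorm H x"
proof -
  define w where "w = matrix_inv H *v a"
  define X where "X = x \<bullet> (H *v x)"
  define A where "A = a \<bullet> w"
  define c where "c = a \<bullet> x"
  have Hw: "H *v w = a" unfolding w_def by (rule HM)
  have key: "0 \<le> t^2 * X - 2 * t * c + A" for t
  proof -
    have "0 \<le> (t *\<^sub>R x - w) \<bullet> (H *v (t *\<^sub>R x - w))" by (rule QH_nonneg)
    also have "\<dots> = t^2 * X - t * (x \<bullet> a) - t * (w \<bullet> (H *v x)) + w \<bullet> a"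
      by (simp add: X_def algebra_simps matrix_vector_mult_scaleR Hw inner_diff_left inner_diff_right power2_eq_square)
    also have "w \<bullet> (H *v x) = c" using Hsym[of w x] Hw by (simp add: c_def)
    finally show ?thesis by (simp add: A_def c_def inner_commute)
  qed
  have X0: "0 \<le> X" unfolding X_def by (rule QH_nonneg)
  have A0: "0 \<le> A" unfolding A_def w_def by (rule QM_nonneg)
  have "c \<le> sqrt A * sqrt X"
  proof (cases "c \<le> 0")
    case True then show ?thesis using A0 X0 by (smt (verit) mult_nonneg_nonneg real_sqrt_ge_zero)
  next
    case False
    have "X \<noteq> 0"
    proof
      assume "X = 0"
      then have k0: "0 \<le> - 2 * t * c + A" for t using key[of t] by simp
      have "0 \<le> - 2 * ((A + 1) / (2*c)) * c + A" by (rule k0)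
      moreover have "2 * ((A + 1) / (2*c)) * c = A + 1" using False by (simp add: field_simps)
      ultimately show False by linarith
    qed
    then have Xp: "X > 0" using X0 by simp
    have "0 \<le> (c/X)^2 * X - 2 * (c/X) * c + A" by (rule key)
    then have "c^2 \<le> A * X" using Xp by (simp add: field_simps power2_eq_square)
    then have "sqrt (c^2) \<le> sqrt (A * X)" by (rule real_sqrt_le_mono)
    then show ?thesis using False by (simp add: real_sqrt_mult)
  qed
  then show ?thesis unfolding Hinvnorm_def Hnorm_def A_def w_def X_def c_def .
qed

lemma QM_par: "(a + b) \<bullet> (matrix_inv H *v (a + b)) \<le> 2 * (a \<bullet> (matrix_inv H *v a)) + 2 * (b \<bullet> (matrix_inv H *v b))"
proof -
  have "0 \<le> (a - b) \<bullet> (matrix_inv H *v (a - b))" by (rule QM_nonneg)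
  moreover have "b \<bullet> (matrix_inv H *v a) = a \<bullet> (matrix_inv H *v b)"
    using Msym[of b a] by (simp add: inner_commute)
  ultimately show ?thesis
    by (simp add: algebra_simps inner_diff_left inner_diff_right inner_add_left inner_add_right)
qed

end


lemma line_deriv:
  assumes deriv: "\<And>x. (\<phi> has_derivative (\<lambda>u. G x \<bullet> u)) (at x)"
  shows "((\<lambda>t. \<phi> (x + t *\<^sub>R d)) has_real_derivative (G (x + t *\<^sub>R d) \<bullet> d)) (at t)"
proof -
  have l: "((\<lambda>t. x + t *\<^sub>R d) has_derivative (\<lambda>t. t *\<^sub>R d)) (at t)"
    by (auto intro!: derivative_eq_intros)
  have "((\<lambda>t. \<phi> (x + t *\<^sub>R d)) has_derivative (\<lambda>s. G (x + t *\<^sub>R d) \<bullet> (s *\<^sub>R d))) (at t)"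
    using has_derivative_compose[OF l deriv] .
  moreover have "(\<lambda>s. G (x + t *\<^sub>R d) \<bullet> (s *\<^sub>R d)) = (*) (G (x + t *\<^sub>R d) \<bullet> d)"
    by (auto simp: mult.commute)
  ultimately show ?thesis unfolding has_field_derivative_def by simp
qed

lemma grad_ineq:
  fixes \<phi> :: "'a::real_inner \<Rightarrow> real"
  assumes deriv: "\<And>x. (\<phi> has_derivative (\<lambda>u. G x \<bullet> u)) (at x)"
    and conv: "convex_on UNIV \<phi>"
  shows "\<phi> y \<ge> \<phi> x + G x \<bullet> (y - x)"
proof -
  define d where "d = y - x"
  define ch where "ch = (\<lambda>t::real. \<phi> (x + t *\<^sub>R d))"
  have cx: "convex_on UNIV ch"
    unfolding convex_on_def
  proof (intro conjI ballI allI impI)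
    fix t1 t2 u v :: real assume uv: "0 \<le> u" "0 \<le> v" "u + v = 1"
    have "x + (u *\<^sub>R t1 + v *\<^sub>R t2) *\<^sub>R d = u *\<^sub>R (x + t1 *\<^sub>R d) + v *\<^sub>R (x + t2 *\<^sub>R d)"
      using uv(3) by (simp add: algebra_simps flip: scaleR_add_left)
    then show "ch (u *\<^sub>R t1 + v *\<^sub>R t2) \<le> u * ch t1 + v * ch t2"
      unfolding ch_def using conv uv unfolding convex_on_def by auto
  qed simp
  have dv: "(ch has_field_derivative (G x \<bullet> d)) (at 0 within UNIV)"
    unfolding ch_def using line_deriv[OF deriv, of x d 0] by simp
  have "ch 1 - ch 0 \<ge> (G x \<bullet> d) * (1 - 0)"
    by (rule convex_on_imp_above_tangent[OF cx _ _ _ dv]) auto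
  then show ?thesis unfolding ch_def d_def by simp
qed

context
  fixes H :: "real^'d^'d"
  assumes H: "sym_pos_def_mat H"
begin

lemma descent:
  fixes \<phi> :: "real^'d \<Rightarrow> real"
  assumes deriv: "\<And>x. (\<phi> has_derivative (\<lambda>u. G x \<bullet> u)) (at x)"
    and sm: "\<And>a b. Hinvnorm H (G a - G b) \<le> L * Hnorm H (a - b)"
  shows "\<phi> w \<le> \<phi> y + G y \<bullet> (w - y) + L / 2 * ((w - y) \<bullet> (H *v (w - y)))"
proof -
  define d where "d = w - y"
  define Q where "Q = d \<bullet> (H *v d)"
  define ch where "ch = (\<lambda>t::real. \<phi> (y + t *\<^sub>R d) - t * (G y \<bullet> d) - t^2 * (L / 2 * Q))"
  have D: "(ch has_real_derivative (G (y + t *\<^sub>R d) \<bullet> d - G y \<bullet> d - L * t * Q)) (at t)" for t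
  proof -
    have d1: "((\<lambda>t. t * (G y \<bullet> d)) has_real_derivative (1 * (G y \<bullet> d))) (at t)"
      by (intro DERIV_cmult_right DERIV_ident)
    have d2: "((\<lambda>t. t^2 * (L / 2 * Q)) has_real_derivative ((real 2 * t ^ (2 - Suc 0)) * (L / 2 * Q))) (at t)"
      by (intro DERIV_cmult_right DERIV_pow)
    have "(ch has_real_derivative (G (y + t *\<^sub>R d) \<bullet> d - 1 * (G y \<bullet> d) - (real 2 * t ^ (2 - Suc 0)) * (L / 2 * Q))) (at t)"
      unfolding ch_def by (intro DERIV_diff line_deriv[OF deriv] d1 d2)
    then show ?thesis by (simp add: mult.assoc mult.left_commute)
  qed
  have np: "G (y + t *\<^sub>R d) \<bullet> d - G y \<bullet> d - L * t * Q \<le> 0" if t: "0 \<le> t" for t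
  proof -
    have "G (y + t *\<^sub>R d) \<bullet> d - G y \<bullet> d = (G (y + t *\<^sub>R d) - G y) \<bullet> d" by (simp add: inner_diff_left)
    also have "\<dots> \<le> Hinvnorm H (G (y + t *\<^sub>R d) - G y) * Hnorm H d" by (rule CS[OF H])
    also have "\<dots> \<le> (L * Hnorm H (t *\<^sub>R d)) * Hnorm H d"
      using sm[of "y + t *\<^sub>R d" y] by (intro mult_right_mono Hnorm_nonneg[OF H]) auto
    also have "\<dots> = L * t * Q" unfolding Q_def using Hnorm_scale[OF H, of t d] Hnorm_sq[OF H, of d] t
      by (simp add: power2_eq_square)
    finally show ?thesis by simp
  qed
  have "ch 0 \<ge> ch 1"
  proof (rule DERIV_nonpos_imp_nonincreasing[of 0 1])
    fix t :: real assume "0 \<le> t" "t \<le> 1"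
    then show "\<exists>y. (ch has_real_derivative y) (at t) \<and> y \<le> 0" using D[of t] np[of t] by blast
  qed simp
  then show ?thesis unfolding ch_def d_def Q_def by simp
qed

lemma cocoercive:
  fixes \<phi> :: "real^'d \<Rightarrow> real"
  assumes deriv: "\<And>x. (\<phi> has_derivative (\<lambda>u. G x \<bullet> u)) (at x)"
    and conv: "convex_on UNIV \<phi>"
    and sm: "\<And>a b. Hinvnorm H (G a - G b) \<le> L * Hnorm H (a - b)"
    and L: "L > 0"
  shows "(G y - G x) \<bullet> (matrix_inv H *v (G y - G x)) \<le> 2 * L * (\<phi> y - \<phi> x - G x \<bullet> (y - x))"
proof -
  define M where "M = matrix_inv H"
  define \<psi> where "\<psi> = (\<lambda>z. \<phi> z - G x \<bullet> z)"
  define G' where "G' = (\<lambda>z. G z - G x)"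
  have d\<psi>: "(\<psi> has_derivative (\<lambda>u. G' z \<bullet> u)) (at z)" for z
  proof -
    have "(\<psi> has_derivative (\<lambda>u. G z \<bullet> u - G x \<bullet> u)) (at z)"
      unfolding \<psi>_def by (intro has_derivative_diff deriv has_derivative_inner_right has_derivative_ident)
    then show ?thesis unfolding G'_def by (simp add: inner_diff_left)
  qed
  have sm': "Hinvnorm H (G' a - G' b) \<le> L * Hnorm H (a - b)" for a b
    unfolding G'_def using sm[of a b] by simp
  define e where "e = G y - G x"
  define w where "w = y - (1 / L) *\<^sub>R (M *v e)"
  have wy: "w - y = (- (1 / L)) *\<^sub>R (matrix_inv H *v e)" unfolding w_def M_def by simp
  have Hwy: "H *v (w - y) = (- (1 / L)) *\<^sub>R e" unfolding wy
    by (subst matrix_vector_mult_scaleR) (simp add: HM[OF H])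
  have "\<psi> w \<le> \<psi> y + G' y \<bullet> (w - y) + L / 2 * ((w - y) \<bullet> (H *v (w - y)))"
    by (rule descent[OF d\<psi> sm'])
  also have "G' y \<bullet> (w - y) = - (1 / L) * (e \<bullet> (M *v e))"
    unfolding G'_def w_def e_def by simp
  also have "(w - y) \<bullet> (H *v (w - y)) = (1 / L)^2 * (e \<bullet> (M *v e))"
    unfolding M_def
    using wy Hwy by (simp add: power2_eq_square inner_commute)
  finally have a: "\<psi> w \<le> \<psi> y - (1 / (2 * L)) * (e \<bullet> (M *v e))"
    using L by (simp add: power2_eq_square field_simps)
  have "\<phi> w \<ge> \<phi> x + G x \<bullet> (w - x)" by (rule grad_ineq[OF deriv conv])
  then have "\<psi> w \<ge> \<psi> x" unfolding \<psi>_def by (simp add: inner_diff_right)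
  with a have "(1 / (2 * L)) * (e \<bullet> (M *v e)) \<le> \<psi> y - \<psi> x" by linarith
  then have "e \<bullet> (M *v e) \<le> 2 * L * (\<psi> y - \<psi> x)" using L by (simp add: field_simps)
  then show ?thesis unfolding e_def M_def \<psi>_def by (simp add: inner_diff_right algebra_simps)
qed

end


lemma prod_if_subset:
  assumes "finite A" "S \<subseteq> A"
  shows "(\<Prod>l\<in>A. if l \<in> S then F l else 1) = (\<Prod>l\<in>S. (F l :: real))"
proof -
  have "(\<Prod>l\<in>A. if l \<in> S then F l else 1) = prod F (A \<inter> {l. l \<in> S}) * prod (\<lambda>_. 1) (A \<inter> - {l. l \<in> S})"
    by (rule prod.If_cases) (rule assms(1))
  also have "A \<inter> {l. l \<in> S} = S" using assms(2) by auto
  finally show ?thesis by simp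
qed

lemma sum_ofbool: "(\<Sum>v\<in>UNIV. f v * of_bool (v = a)) = (f a :: real)" for a :: "'i::finite"
proof -
  have "(\<Sum>v\<in>UNIV. f v * of_bool (v = a)) = (\<Sum>v\<in>UNIV. if v = a then f a else 0)"
    by (rule sum.cong) auto
  then show ?thesis by simp
qed

lemma sum_ofbool': "(\<Sum>v\<in>UNIV. f v * of_bool (a = v)) = (f a :: real)" for a :: "'i::finite"
  using sum_ofbool[of f a] by (simp add: eq_commute)

lemma key_prod:
  fixes p :: "'i::finite \<Rightarrow> real" and A :: "nat set"
  assumes A: "finite A" and S: "S \<subseteq> A" and p1: "sum p UNIV = 1"
  shows "(\<Sum>I\<in>PiE A (\<lambda>_. UNIV). \<Prod>l\<in>A. p (I l) * (if l \<in> S then of_bool (I l = c l) else 1)) = (\<Prod>l\<in>S. p (c l))"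
proof -
  have "(\<Sum>I\<in>PiE A (\<lambda>_. UNIV). \<Prod>l\<in>A. p (I l) * (if l \<in> S then of_bool (I l = c l) else 1))
      = (\<Prod>l\<in>A. \<Sum>v\<in>UNIV. p v * (if l \<in> S then of_bool (v = c l) else 1))"
    by (rule prod_sum_PiE[symmetric]) (use A in auto)
  also have "\<dots> = (\<Prod>l\<in>A. if l \<in> S then p (c l) else 1)"
  proof (rule prod.cong[OF refl])
    fix l assume "l \<in> A"
    show "(\<Sum>v\<in>UNIV. p v * (if l \<in> S then of_bool (v = c l) else 1)) = (if l \<in> S then p (c l) else 1)"
      using p1 by (cases "l \<in> S") (simp_all add: sum_ofbool)
  qed
  also have "\<dots> = (\<Prod>l\<in>S. p (c l))" by (rule prod_if_subset[OF A S])
  finally show ?thesis .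
qed

lemma single_exp:
  fixes p :: "'i::finite \<Rightarrow> real" and A :: "nat set"
  assumes A: "finite A" and j: "j \<in> A" and p1: "sum p UNIV = 1"
  shows "(\<Sum>I\<in>PiE A (\<lambda>_. UNIV). (\<Prod>l\<in>A. p (I l)) * \<psi> (I j)) = (\<Sum>u\<in>UNIV. p u * \<psi> u)"
proof -
  have "(\<Sum>I\<in>PiE A (\<lambda>_. UNIV). (\<Prod>l\<in>A. p (I l)) * \<psi> (I j))
      = (\<Sum>I\<in>PiE A (\<lambda>_. UNIV). \<Sum>u\<in>UNIV. \<psi> u * (\<Prod>l\<in>A. p (I l) * (if l \<in> {j} then of_bool (I l = (\<lambda>_. u) l) else 1)))"
  proof (rule sum.cong[OF refl])
    fix I :: "nat \<Rightarrow> 'i"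
    have e: "(\<Prod>l\<in>A. p (I l) * (if l \<in> {j} then of_bool (I l = u) else 1)) = (\<Prod>l\<in>A. p (I l)) * of_bool (I j = u)" for u
      using prod_if_subset[OF A, of "{j}" "\<lambda>l. of_bool (I l = u)"] j by (simp add: prod.distrib)
    show "(\<Prod>l\<in>A. p (I l)) * \<psi> (I j) = (\<Sum>u\<in>UNIV. \<psi> u * (\<Prod>l\<in>A. p (I l) * (if l \<in> {j} then of_bool (I l = (\<lambda>_. u) l) else 1)))"
      unfolding e by (simp add: of_bool_def if_distrib cong: if_cong)
  qed
  also have "\<dots> = (\<Sum>u\<in>UNIV. \<psi> u * (\<Sum>I\<in>PiE A (\<lambda>_. UNIV). \<Prod>l\<in>A. p (I l) * (if l \<in> {j} then of_bool (I l = (\<lambda>_. u) l) else 1)))"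
    by (subst sum.swap) (simp add: sum_distrib_left)
  also have "\<dots> = (\<Sum>u\<in>UNIV. \<psi> u * p u)"
  proof (rule sum.cong[OF refl])
    fix u
    show "\<psi> u * (\<Sum>I\<in>PiE A (\<lambda>_. UNIV). \<Prod>l\<in>A. p (I l) * (if l \<in> {j} then of_bool (I l = (\<lambda>_. u) l) else 1)) = \<psi> u * p u"
      using key_prod[OF A _ p1, of "{j}" "\<lambda>_. u"] j by simp
  qed
  finally show ?thesis by (simp add: mult.commute)
qed

lemma pair_exp:
  fixes p :: "'i::finite \<Rightarrow> real" and A :: "nat set"
  assumes A: "finite A" and j: "j \<in> A" and k: "k \<in> A" and jk: "j \<noteq> k" and p1: "sum p UNIV = 1"
  shows "(\<Sum>I\<in>PiE A (\<lambda>_. UNIV). (\<Prod>l\<in>A. p (I l)) * \<phi> (I j) (I k)) = (\<Sum>u\<in>UNIV. \<Sum>u'\<in>UNIV. p u * p u' * \<phi> u u')"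
proof -
  define c where "c = (\<lambda>(u::'i) (u'::'i) (l::nat). if l = j then u else u')"
  have S: "{j, k} \<subseteq> A" using j k by auto
  have "(\<Sum>I\<in>PiE A (\<lambda>_. UNIV). (\<Prod>l\<in>A. p (I l)) * \<phi> (I j) (I k))
      = (\<Sum>I\<in>PiE A (\<lambda>_. UNIV). \<Sum>u\<in>UNIV. \<Sum>u'\<in>UNIV. \<phi> u u' * (\<Prod>l\<in>A. p (I l) * (if l \<in> {j, k} then of_bool (I l = c u u' l) else 1)))"
  proof (rule sum.cong[OF refl])
    fix I :: "nat \<Rightarrow> 'i"
    have e: "(\<Prod>l\<in>A. p (I l) * (if l \<in> {j, k} then of_bool (I l = c u u' l) else 1)) = (\<Prod>l\<in>A. p (I l)) * (of_bool (I j = u) * of_bool (I k = u'))" for u u'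
      using prod_if_subset[OF A S, of "\<lambda>l. of_bool (I l = c u u' l)"] jk by (simp add: prod.distrib c_def)
    show "(\<Prod>l\<in>A. p (I l)) * \<phi> (I j) (I k) = (\<Sum>u\<in>UNIV. \<Sum>u'\<in>UNIV. \<phi> u u' * (\<Prod>l\<in>A. p (I l) * (if l \<in> {j, k} then of_bool (I l = c u u' l) else 1)))"
    proof -
      define P where "P = (\<Prod>l\<in>A. p (I l))"
      have "(\<Sum>u\<in>UNIV. \<Sum>u'\<in>UNIV. \<phi> u u' * (P * (of_bool (I j = u) * of_bool (I k = u'))))
          = (\<Sum>u\<in>UNIV. (\<Sum>u'\<in>UNIV. (P * \<phi> u u' * of_bool (I j = u)) * of_bool (I k = u')))"
        by (intro sum.cong refl) (simp add: ac_simps)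
      also have "\<dots> = (\<Sum>u\<in>UNIV. (P * \<phi> u (I k)) * of_bool (I j = u))"
        by (simp only: sum_ofbool')
      also have "\<dots> = P * \<phi> (I j) (I k)" by (simp only: sum_ofbool')
      finally show ?thesis unfolding e P_def by simp
    qed
  qed
  also have "\<dots> = (\<Sum>u\<in>UNIV. \<Sum>u'\<in>UNIV. \<phi> u u' * (\<Sum>I\<in>PiE A (\<lambda>_. UNIV). \<Prod>l\<in>A. p (I l) * (if l \<in> {j, k} then of_bool (I l = c u u' l) else 1)))"
    by (subst sum.swap, rule sum.cong[OF refl], subst sum.swap) (simp add: sum_distrib_left)
  also have "\<dots> = (\<Sum>u\<in>UNIV. \<Sum>u'\<in>UNIV. \<phi> u u' * (p u * p u'))"
    using key_prod[OF A S p1] jk by (simp add: c_def)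
  finally show ?thesis by (simp add: mult.commute)
qed

lemma Mv_sum: "M *v (\<Sum>j\<in>S. z j) = (\<Sum>j\<in>S. M *v z j)" for M :: "real^'n^'m"
  by (induction S rule: infinite_finite_induct) (simp_all add: matrix_vector_right_distrib)

lemma var_sum:
  fixes p :: "'i::finite \<Rightarrow> real" and Z :: "'i \<Rightarrow> real^'d" and M :: "real^'d^'d"
  assumes p1: "sum p UNIV = 1"
    and Z0: "(\<Sum>u\<in>UNIV. p u *\<^sub>R Z u) = 0"
  shows "(\<Sum>I\<in>PiE {..<m} (\<lambda>_. UNIV). (\<Prod>j<m. p (I j)) * ((\<Sum>j<m. Z (I j)) \<bullet> (M *v (\<Sum>j<m. Z (I j)))))
       = real m * (\<Sum>u\<in>UNIV. p u * (Z u \<bullet> (M *v Z u)))"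
proof -
  define D where "D = (\<Sum>u\<in>UNIV. p u * (Z u \<bullet> (M *v Z u)))"
  have exp: "(\<Sum>j<m. Z (I j)) \<bullet> (M *v (\<Sum>j<m. Z (I j))) = (\<Sum>j<m. \<Sum>k<m. Z (I j) \<bullet> (M *v Z (I k)))" for I :: "nat \<Rightarrow> 'i"
    by (simp add: Mv_sum inner_sum_left inner_sum_right) (rule sum.swap)
  have jk: "(\<Sum>I\<in>PiE {..<m} (\<lambda>_. UNIV). (\<Prod>l<m. p (I l)) * (Z (I j) \<bullet> (M *v Z (I k)))) = (if j = k then D else 0)"
    if j: "j < m" and k: "k < m" for j k
  proof (cases "j = k")
    case True
    then show ?thesis
      using single_exp[OF finite_lessThan _ p1, where j=j and \<psi>="\<lambda>u. Z u \<bullet> (M *v Z u)"] j by (simp add: D_def)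
  next
    case False
    have "(\<Sum>I\<in>PiE {..<m} (\<lambda>_. UNIV). (\<Prod>l<m. p (I l)) * (Z (I j) \<bullet> (M *v Z (I k))))
        = (\<Sum>u\<in>UNIV. \<Sum>u'\<in>UNIV. p u * p u' * (Z u \<bullet> (M *v Z u')))"
      using pair_exp[OF finite_lessThan _ _ False p1, where \<phi>="\<lambda>u u'. Z u \<bullet> (M *v Z u')"] j k by simp
    also have "\<dots> = (\<Sum>u\<in>UNIV. p u *\<^sub>R Z u) \<bullet> (M *v (\<Sum>u'\<in>UNIV. p u' *\<^sub>R Z u'))"
      by (simp add: Mv_sum inner_sum_left inner_sum_right matrix_vector_mult_scaleR sum_distrib_left mult.assoc) (subst sum.swap, simp add: ac_simps)
    also have "\<dots> = 0" using Z0 by simp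
    finally show ?thesis using False by simp
  qed
  have "(\<Sum>I\<in>PiE {..<m} (\<lambda>_. UNIV). (\<Prod>j<m. p (I j)) * ((\<Sum>j<m. Z (I j)) \<bullet> (M *v (\<Sum>j<m. Z (I j)))))
      = (\<Sum>j<m. \<Sum>k<m. \<Sum>I\<in>PiE {..<m} (\<lambda>_. UNIV). (\<Prod>l<m. p (I l)) * (Z (I j) \<bullet> (M *v Z (I k))))"
    unfolding exp by (simp add: sum_distrib_left sum.swap[of _ "PiE _ _"])
  also have "\<dots> = (\<Sum>j<m. \<Sum>k<m. if j = k then D else 0)"
    by (intro sum.cong refl) (simp add: jk)
  also have "\<dots> = real m * D" by simp
  finally show ?thesis unfolding D_def .
qed



lemma small_t:
  fixes a C :: real
  assumes C: "C \<ge> 0" and h: "\<And>t. 0 < t \<Longrightarrow> t < 1 \<Longrightarrow> 0 \<le> a + C * t"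
  shows "0 \<le> a"
proof (rule ccontr)
  assume "\<not> 0 \<le> a" then have a: "a < 0" by simp
  define t where "t = min (1/2) (- a / (2 * (C + 1)))"
  have t0: "0 < t" using a C unfolding t_def by (simp add: field_simps)
  have t1: "t < 1" unfolding t_def by simp
  have "t \<le> - a / (2 * (C + 1))" unfolding t_def by simp
  then have "(C + 1) * t \<le> - a / 2" using C by (simp add: field_simps)
  moreover have "C * t \<le> (C + 1) * t" using t0 by (simp add: field_simps)
  ultimately have "a + C * t < 0" using a by linarith
  with h[OF t0 t1] show False by linarith
qed

lemma Q_scale: "(c *\<^sub>R a) \<bullet> (M *v (c *\<^sub>R a)) = c^2 * (a \<bullet> (M *v a))" for M :: "real^'n^'n"
  by (simp add: matrix_vector_mult_scaleR power2_eq_square)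

lemma Q_neg: "(a - b) \<bullet> (M *v (a - b)) = (b - a) \<bullet> (M *v (b - a))" for M :: "real^'n^'n"
  using Q_scale[of "-1" "a - b" M] by simp



theorem lemma6:
  fixes f :: "'i::finite \<Rightarrow> real^'d \<Rightarrow> real"
    and g :: "'i \<Rightarrow> real^'d \<Rightarrow> real^'d"
    and h :: "real^'d \<Rightarrow> ereal"
    and H :: "real^'d^'d"
    and L :: "'i \<Rightarrow> real"
    and \<mu> :: real
    and b :: nat
    and xstar xk yk xs :: "real^'d"
  defines "n \<equiv> real CARD('i)"
  defines "Lavg \<equiv> (\<Sum>i\<in>UNIV. L i) / n"
  defines "fbar \<equiv> (\<lambda>x. (\<Sum>i\<in>UNIV. f i x) / n)"
  defines "gradf \<equiv> (\<lambda>x. (1 / n) *\<^sub>R (\<Sum>i\<in>UNIV. g i x))"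
  defines "F \<equiv> (\<lambda>x. ereal (fbar x) + h x)"
  defines "p \<equiv> (\<lambda>i. L i / (n * Lavg))"
  defines "v \<equiv> (\<lambda>I::nat \<Rightarrow> 'i. (1 / real b) *\<^sub>R
              (\<Sum>j<b. (1 / (n * p (I j))) *\<^sub>R (g (I j) yk - g (I j) xs)) + gradf xs)"
  assumes H: "sym_pos_def_mat H"
    and grad: "\<And>i x. (f i has_derivative (\<lambda>u. g i x \<bullet> u)) (at x)"
    and fconv: "\<And>i. convex_on UNIV (f i)"
    and smooth: "\<And>i x y. Hinvnorm H (g i x - g i y) \<le> L i * Hnorm H (x - y)"
    and mu: "\<mu> > 0"
    and strong: "\<And>x y. fbar y \<ge> fbar x + gradf x \<bullet> (y - x) + \<mu> / 2 * (Hnorm H (y - x))\<^sup>2"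
    and hproper: "proper_fun h"
    and hconv: "convex_ext h"
    and hlsc: "lsc_ext h"
    and hdom: "closed (edom h)"
    and xstar: "\<And>x. F xstar \<le> F x"
    and b: "b \<ge> 1"
  shows "ereal (\<Sum>I\<in>PiE {..<b} (\<lambda>_. UNIV). (\<Prod>j<b. p (I j)) * (Hinvnorm H (v I - gradf yk))\<^sup>2)
         \<le> ereal (2 * Lavg\<^sup>2 / real b * (Hnorm H (xk - yk))\<^sup>2)
           + ereal (8 * Lavg / real b) * ((F xk - F xstar) + (F xs - F xstar))"
proof -
  define M where "M = matrix_inv H"
  have nP: "n > 0" unfolding n_def by simp
  have Lnn: "L i \<ge> 0" for i
  proof -
    define e :: "real^'d" where "e = axis undefined 1"
    have "e \<noteq> 0" unfolding e_def by (simp add: axis_eq_0_iff)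
    then have "Hnorm H e > 0" by (rule Hnorm_pos[OF H])
    moreover have "0 \<le> L i * Hnorm H e"
      using smooth[of i e 0] Hinvnorm_nonneg[OF H, of "g i e - g i 0"] by simp
    ultimately show ?thesis by (simp add: zero_le_mult_iff)
  qed
  have Lsum: "(\<Sum>i\<in>UNIV. L i) = n * Lavg" unfolding Lavg_def using nP by simp
  have Lavg0: "Lavg \<ge> 0" unfolding Lavg_def using Lnn nP by (simp add: sum_nonneg)
  define r where "r = (\<lambda>i z. f i z - f i xstar - g i xstar \<bullet> (z - xstar))"
  define R where "R = (\<lambda>z. fbar z - fbar xstar - gradf xstar \<bullet> (z - xstar))"
  have gradf_inner: "gradf x \<bullet> d = (\<Sum>i\<in>UNIV. g i x \<bullet> d) / n" for x d
    unfolding gradf_def by (simp add: inner_sum_left)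
  have Rsum: "R z = (\<Sum>i\<in>UNIV. r i z) / n" for z
    unfolding R_def r_def fbar_def gradf_inner using nP
    by (simp add: sum_subtractf sum.distrib field_simps)
  have rnn: "r i z \<ge> 0" for i z
    unfolding r_def using grad_ineq[OF grad[of i] fconv[of i], where x=xstar and y=z] by simp
  have fdesc: "fbar w \<le> fbar xstar + gradf xstar \<bullet> (w - xstar) + Lavg / 2 * ((w - xstar) \<bullet> (H *v (w - xstar)))" for w
  proof -
    define Q where "Q = (w - xstar) \<bullet> (H *v (w - xstar))"
    have "f i w \<le> f i xstar + g i xstar \<bullet> (w - xstar) + L i / 2 * Q" for i
      unfolding Q_def by (rule descent[OF H grad[of i] smooth[of i]])
    then have "(\<Sum>i\<in>UNIV. f i w) \<le> (\<Sum>i\<in>UNIV. f i xstar + g i xstar \<bullet> (w - xstar) + L i / 2 * Q)"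
      by (rule sum_mono)
    also have "\<dots> = (\<Sum>i\<in>UNIV. f i xstar) + (\<Sum>i\<in>UNIV. g i xstar \<bullet> (w - xstar)) + (\<Sum>i\<in>UNIV. L i) / 2 * Q"
      by (simp add: sum.distrib sum_distrib_right sum_divide_distrib)
    finally have "(\<Sum>i\<in>UNIV. f i w) / n \<le> ((\<Sum>i\<in>UNIV. f i xstar) + (\<Sum>i\<in>UNIV. g i xstar \<bullet> (w - xstar)) + (\<Sum>i\<in>UNIV. L i) / 2 * Q) / n"
      using nP by (simp add: divide_right_mono)
    then show ?thesis unfolding fbar_def gradf_inner Lsum Q_def[symmetric] using nP
      by (simp add: add_divide_distrib)
  qed
  obtain x0 where x0: "h x0 \<noteq> \<infinity>" using hproper unfolding proper_fun_def by blast
  have hninf: "h x \<noteq> -\<infinity>" for x using hproper unfolding proper_fun_def by blast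
  have "F xstar \<le> F x0" by (rule xstar)
  also have "F x0 < \<infinity>" unfolding F_def using x0 hninf[of x0] by (cases "h x0") auto
  finally have "h xstar \<noteq> \<infinity>" unfolding F_def by auto
  then obtain hs where hs: "h xstar = ereal hs" using hninf[of xstar] by (cases "h xstar") auto
  have Fs: "F xstar = ereal (fbar xstar + hs)" unfolding F_def hs by simp
  have opt: "ereal (R z) \<le> F z - F xstar" for z
  proof (cases "h z = \<infinity>")
    case True
    then show ?thesis unfolding Fs unfolding F_def by simp
  next
    case False
    then obtain hz where hz: "h z = ereal hz" using hninf[of z] by (cases "h z") auto
    define d where "d = z - xstar"
    define Q where "Q = d \<bullet> (H *v d)"
    define a where "a = gradf xstar \<bullet> d + hz - hs"
    have "0 \<le> a + (Lavg / 2 * Q) * t" if t: "0 < t" "t < 1" for t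
    proof -
      define w where "w = xstar + t *\<^sub>R d"
      have wc: "t *\<^sub>R z + (1 - t) *\<^sub>R xstar = w" unfolding w_def d_def by (simp add: algebra_simps)
      have "h w \<le> ereal t * h z + ereal (1 - t) * h xstar"
        using hconv t unfolding convex_ext_def wc[symmetric] by auto
      then have hw: "h w \<le> ereal (t * hz + (1 - t) * hs)" unfolding hz hs by simp
      have "F xstar \<le> F w" by (rule xstar)
      also have "\<dots> \<le> ereal (fbar w + (t * hz + (1 - t) * hs))" unfolding F_def
        using hw by (metis add_left_mono plus_ereal.simps(1))
      finally have r1: "fbar xstar + hs \<le> fbar w + (t * hz + (1 - t) * hs)" unfolding Fs by simp
      have "fbar w \<le> fbar xstar + t * (gradf xstar \<bullet> d) + Lavg / 2 * (t^2 * Q)"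
        using fdesc[of w] unfolding w_def Q_def by (simp add: matrix_vector_mult_scaleR power2_eq_square)
      with r1 have "0 \<le> t * (gradf xstar \<bullet> d + hz - hs) + t * (Lavg / 2 * Q * t)"
        by (simp add: algebra_simps power2_eq_square)
      then have "0 \<le> t * (a + Lavg / 2 * Q * t)" unfolding a_def by (simp add: algebra_simps)
      then show ?thesis using t by (simp add: zero_le_mult_iff)
    qed
    moreover have "Lavg / 2 * Q \<ge> 0" unfolding Q_def using Lavg0 QH_nonneg[OF H] by simp
    ultimately have "0 \<le> a" using small_t by blast
    then have "R z \<le> (fbar z + hz) - (fbar xstar + hs)" unfolding R_def a_def d_def by simp
    then show ?thesis unfolding Fs unfolding F_def hz by simp
  qed
  show ?thesis
  proof (cases "Lavg = 0")
    case True
    have z: "(\<Prod>j<b. p (I j)) = 0" for I :: "nat \<Rightarrow> 'i"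
      using b unfolding p_def True by (intro prod_zero) (auto intro!: exI[of _ 0])
    have s0: "(\<Sum>I\<in>PiE {..<b} (\<lambda>_. UNIV). (\<Prod>j<b. p (I j)) * (Hinvnorm H (v I - gradf yk))\<^sup>2) = 0"
      by (simp only: z mult_zero_left sum.neutral_const)
    show ?thesis unfolding s0 using True by (simp flip: zero_ereal_def)
  next
    case False
    then have Lp: "Lavg > 0" using Lavg0 by simp
    define Qm where "Qm = (\<lambda>a. a \<bullet> (M *v a))"
    define Nh where "Nh = (Hnorm H (xk - yk))\<^sup>2"
    have Qm_nn: "Qm a \<ge> 0" for a unfolding Qm_def M_def by (rule QM_nonneg[OF H])
    have p1: "sum p UNIV = 1" unfolding p_def using Lp nP
      by (simp add: sum_divide_distrib[symmetric] Lsum)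
    have gz: "g i a = g i c" if "L i = 0" for i a c
      using smooth[of i a c] Hinvnorm_zero[OF H, of "g i a - g i c"] that by simp
    have pz: "p i = 0 \<longleftrightarrow> L i = 0" for i unfolding p_def using Lp nP by simp
    define X where "X = (\<lambda>i. (1 / (n * p i)) *\<^sub>R (g i yk - g i xs))"
    define m where "m = gradf yk - gradf xs"
    have pX: "p i *\<^sub>R X i = (1 / n) *\<^sub>R (g i yk - g i xs)" for i
    proof (cases "L i = 0")
      case True then show ?thesis using gz[OF True, of yk xs] pz[of i] unfolding X_def by simp
    next
      case False then have "p i \<noteq> 0" using pz by simp
      then show ?thesis unfolding X_def using nP by (simp add: scaleR_scaleR)
    qed
    have sumpX: "(\<Sum>u\<in>UNIV. p u *\<^sub>R X u) = m"
      unfolding pX m_def gradf_def by (simp add: scaleR_sum_right[symmetric] sum_subtractf scaleR_diff_right)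
    define Z where "Z = (\<lambda>u. X u - m)"
    have Z0: "(\<Sum>u\<in>UNIV. p u *\<^sub>R Z u) = 0"
      unfolding Z_def by (simp add: scaleR_diff_right sum_subtractf sumpX p1 scaleR_sum_left[symmetric])
    have vI: "v I - gradf yk = (1 / real b) *\<^sub>R (\<Sum>j<b. Z (I j))" for I :: "nat \<Rightarrow> 'i"
    proof -
      have "v I = (1 / real b) *\<^sub>R (\<Sum>j<b. X (I j)) + gradf xs" unfolding v_def X_def by simp
      moreover have "(1 / real b) *\<^sub>R (\<Sum>j<b. Z (I j)) = (1 / real b) *\<^sub>R (\<Sum>j<b. X (I j)) - m"
        unfolding Z_def using b by (simp add: sum_subtractf scaleR_diff_right sum_constant_scaleR del: sum_constant)
      ultimately show ?thesis unfolding m_def by simp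
    qed
    have LHS: "(\<Sum>I\<in>PiE {..<b} (\<lambda>_. UNIV). (\<Prod>j<b. p (I j)) * (Hinvnorm H (v I - gradf yk))\<^sup>2)
        = (1 / real b) * (\<Sum>u\<in>UNIV. p u * Qm (Z u))"
    proof -
      have "(\<Sum>I\<in>PiE {..<b} (\<lambda>_. UNIV). (\<Prod>j<b. p (I j)) * (Hinvnorm H (v I - gradf yk))\<^sup>2)
          = (\<Sum>I\<in>PiE {..<b} (\<lambda>_. UNIV). (1 / real b)^2 * ((\<Prod>j<b. p (I j)) * ((\<Sum>j<b. Z (I j)) \<bullet> (M *v (\<Sum>j<b. Z (I j))))))"
        unfolding vI Hinvnorm_sq[OF H] M_def Q_scale by (simp add: ac_simps)
      also have "\<dots> = (1 / real b)^2 * (real b * (\<Sum>u\<in>UNIV. p u * (Z u \<bullet> (M *v Z u))))"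
        by (simp add: sum_distrib_left[symmetric] var_sum[OF p1 Z0])
      finally show ?thesis unfolding Qm_def using b by (simp add: power2_eq_square)
    qed
    have var_le: "(\<Sum>u\<in>UNIV. p u * Qm (Z u)) \<le> (\<Sum>u\<in>UNIV. p u * Qm (X u))"
    proof -
      have e: "Qm (Z u) = Qm (X u) - 2 * (X u \<bullet> (M *v m)) + Qm m" for u
      proof -
        have "m \<bullet> (M *v X u) = X u \<bullet> (M *v m)" using Msym[OF H, of m "X u"] unfolding M_def
          by (simp add: inner_commute)
        then show ?thesis unfolding Qm_def Z_def
          by (simp add: inner_diff_left inner_diff_right matrix_vector_mult_diff_distrib)
      qed
      have s2: "(\<Sum>u\<in>UNIV. p u * (X u \<bullet> (M *v m))) = Qm m"
        unfolding Qm_def sumpX[symmetric] by (simp add: inner_sum_left)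
      have "(\<Sum>u\<in>UNIV. p u * Qm (Z u)) = (\<Sum>u\<in>UNIV. p u * Qm (X u)) - 2 * (\<Sum>u\<in>UNIV. p u * (X u \<bullet> (M *v m))) + (\<Sum>u\<in>UNIV. p u) * Qm m"
        unfolding e by (simp add: algebra_simps sum.distrib sum_subtractf sum_distrib_left sum_distrib_right)
      also have "\<dots> = (\<Sum>u\<in>UNIV. p u * Qm (X u)) - Qm m" unfolding s2 p1 by simp
      finally show ?thesis using Qm_nn[of m] by simp
    qed
    have pb: "p i * Qm (X i) \<le> Lavg / n * (2 * L i * Nh + 8 * r i xk + 8 * r i xs)" for i
    proof (cases "L i = 0")
      case True
      then have "p i = 0" using pz by simp
      moreover have "0 \<le> Lavg / n * (2 * L i * Nh + 8 * r i xk + 8 * r i xs)"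
        using Lavg0 nP rnn[of i xk] rnn[of i xs] Lnn[of i] unfolding Nh_def by simp
      ultimately show ?thesis by simp
    next
      case False
      then have Li: "L i > 0" using Lnn[of i] by simp
      have pi: "p i = L i / (n * Lavg)" unfolding p_def ..
      define D where "D = g i yk - g i xs"
      have coc: "Qm (g i z - g i xstar) \<le> 2 * L i * r i z" for z
        unfolding Qm_def M_def r_def by (rule cocoercive[OF H grad[of i] fconv[of i] smooth[of i] Li])
      have sq: "Qm (g i yk - g i xk) \<le> (L i)^2 * Nh"
      proof -
        have "Hinvnorm H (g i yk - g i xk) \<le> L i * Hnorm H (xk - yk)"
          using smooth[of i yk xk] Hnorm_commute[OF H, of yk xk] by simp
        then have "(Hinvnorm H (g i yk - g i xk))^2 \<le> (L i * Hnorm H (xk - yk))^2"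
          by (rule power_mono) (rule Hinvnorm_nonneg[OF H])
        then show ?thesis unfolding Qm_def M_def Hinvnorm_sq[OF H] Nh_def by (simp add: power_mult_distrib)
      qed
      have "Qm D \<le> 2 * Qm (g i yk - g i xk) + 2 * Qm (g i xk - g i xs)"
        using QM_par[OF H, of "g i yk - g i xk" "g i xk - g i xs"] unfolding Qm_def M_def D_def by simp
      moreover have "Qm (g i xk - g i xs) \<le> 2 * Qm (g i xk - g i xstar) + 2 * Qm (g i xs - g i xstar)"
        using QM_par[OF H, of "g i xk - g i xstar" "g i xstar - g i xs"] Q_neg[of "g i xs" "g i xstar" M]
        unfolding Qm_def M_def by simp
      ultimately have "Qm D \<le> 2 * ((L i)^2 * Nh) + 4 * (2 * L i * r i xk) + 4 * (2 * L i * r i xs)"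
        using sq coc[of xk] coc[of xs] by linarith
      then have QD: "Qm D \<le> 2 * (L i)^2 * Nh + 8 * L i * (r i xk + r i xs)"
        by (simp add: algebra_simps)
      have "p i * Qm (X i) = Lavg / (n * L i) * Qm D"
        unfolding X_def D_def[symmetric] Qm_def Q_scale using Li Lp nP unfolding pi
        by (simp add: field_simps power2_eq_square)
      also have "\<dots> \<le> Lavg / (n * L i) * (2 * (L i)^2 * Nh + 8 * L i * (r i xk + r i xs))"
        using QD Lp nP Li by (intro mult_left_mono) auto
      also have "\<dots> = Lavg / n * (2 * L i * Nh + 8 * r i xk + 8 * r i xs)"
        using Li nP by (simp add: field_simps power2_eq_square)
      finally show ?thesis .
    qed
    have "(\<Sum>u\<in>UNIV. p u * Qm (X u)) \<le> (\<Sum>i\<in>UNIV. Lavg / n * (2 * L i * Nh + 8 * r i xk + 8 * r i xs))"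
      by (rule sum_mono) (rule pb)
    also have "\<dots> = Lavg / n * (2 * (\<Sum>i\<in>UNIV. L i) * Nh + 8 * (\<Sum>i\<in>UNIV. r i xk) + 8 * (\<Sum>i\<in>UNIV. r i xs))"
    proof -
      have "(\<Sum>i\<in>UNIV. 2 * L i * Nh + 8 * r i xk + 8 * r i xs) = 2 * (\<Sum>i\<in>UNIV. L i) * Nh + 8 * (\<Sum>i\<in>UNIV. r i xk) + 8 * (\<Sum>i\<in>UNIV. r i xs)"
        by (simp add: sum.distrib sum_distrib_left sum_distrib_right)
      then show ?thesis by (simp add: sum_distrib_left[symmetric] sum_divide_distrib[symmetric])
    qed
    also have "\<dots> = 2 * Lavg\<^sup>2 * Nh + 8 * Lavg * (R xk + R xs)"
      unfolding Lsum Rsum using nP by (simp add: field_simps power2_eq_square)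
    finally have main: "(\<Sum>u\<in>UNIV. p u * Qm (X u)) \<le> 2 * Lavg\<^sup>2 * Nh + 8 * Lavg * (R xk + R xs)" .
    have real_bd: "(\<Sum>I\<in>PiE {..<b} (\<lambda>_. UNIV). (\<Prod>j<b. p (I j)) * (Hinvnorm H (v I - gradf yk))\<^sup>2)
       \<le> 2 * Lavg\<^sup>2 / real b * Nh + 8 * Lavg / real b * (R xk + R xs)"
    proof -
      have "(1 / real b) * (\<Sum>u\<in>UNIV. p u * Qm (Z u)) \<le> (1 / real b) * (2 * Lavg\<^sup>2 * Nh + 8 * Lavg * (R xk + R xs))"
        using var_le main by (intro mult_left_mono) auto
      moreover have "real b > 0" using b by simp
      ultimately show ?thesis unfolding LHS by (simp add: field_simps)
    qed
    have c0: "0 \<le> 8 * Lavg / real b" using Lavg0 by simp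
    have "ereal (R xk + R xs) \<le> (F xk - F xstar) + (F xs - F xstar)"
      using add_mono[OF opt[of xk] opt[of xs]] by simp
    then have "ereal (8 * Lavg / real b) * ereal (R xk + R xs) \<le> ereal (8 * Lavg / real b) * ((F xk - F xstar) + (F xs - F xstar))"
      by (rule ereal_mult_left_mono) (use c0 in simp)
    then have "ereal (2 * Lavg\<^sup>2 / real b * Nh) + ereal (8 * Lavg / real b) * ereal (R xk + R xs)
        \<le> ereal (2 * Lavg\<^sup>2 / real b * Nh) + ereal (8 * Lavg / real b) * ((F xk - F xstar) + (F xs - F xstar))"
      by (rule add_left_mono)
    moreover have "ereal (\<Sum>I\<in>PiE {..<b} (\<lambda>_. UNIV). (\<Prod>j<b. p (I j)) * (Hinvnorm H (v I - gradf yk))\<^sup>2)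
       \<le> ereal (2 * Lavg\<^sup>2 / real b * Nh) + ereal (8 * Lavg / real b) * ereal (R xk + R xs)"
      using real_bd by simp
    ultimately show ?thesis unfolding Nh_def by (rule order_trans[rotated])
  qed
qed


end
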